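(* Let $\mathcal{M}\subseteq\mathcal{M}_1$ and $\mathbb{P}\in\mathcal{M}$. Let $\alpha$ be of the form $\alpha(Q)=\widetilde\alpha(Q)$ for $Q\in\mathcal{Q}^{\mathbb{P}}$, $\alpha(Q)=+\infty$ for $Q\in\mathcal{M}_1\setminus\mathcal{Q}^{\mathbb{P}}$, where $\mathcal{Q}^{\mathbb{P}}$ is a weak-$*$-closed subset of $\mathcal{P}^{\mathbb{P}}$, $\widetilde\alpha<\infty$ on $\mathcal{Q}^{\mathbb{P}}$ and $\inf_{\mathcal{Q}^{\mathbb{P}}}\widetilde\alpha>-\infty$. Then for all $X\in\mathcal{X}^{\mathcal{M}}\cap L^\infty(\mathbb{P})$, $\widehat\rho^{\mathcal{M}}(X)=\widehat\rho^{\mathbb{P}}(X)=\rho^{\mathbb{P}}(X)=\rho^{\mathcal{M}}(X)$.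
   Context: $(\Omega,\mathcal{F})$ is a measurable space, $\mathcal{M}_1$ the set of probability measures on it with the topology of weak (weak-$*$) convergence, $\mathcal{X}$ the space of pointwise bounded $\mathcal{F}$-measurable real functions, $L^\infty(P)=L^\infty(\Omega,\mathcal{F},P)$, $\mathcal{P}^P=\{Q\in\mathcal{M}_1:Q\ll P\}$. With $\alpha$ as in the claim, $\rho(X)=\sup_{Q\in\mathcal{M}_1}\{\mathbb{E}_Q[-X]-\alpha(Q)\}$ on $\mathcal{X}$ (assumed real-valued). For $P\in\mathcal{M}_1$, $X\in L^\infty(P)$: $\rho^P(X)=\inf_{\{\widetilde X\in\mathcal{X}:P(\widetilde X=X)=1\}}\rho(\widetilde X)$ and $\widehat\rho^P(X)=\sup_{Q\in\mathcal{P}^P}\{\mathbb{E}_Q[-X]-\alpha(Q)\}$. $\mathcal{X}^{\mathcal{M}}=\bigcap_{P\in\mathcal{M}}L^\infty(P)$, $\rho^{\mathcal{M}}(X)=\sup_{P\in\mathcal{M}}\rho^P(X)$ and $\widehat\rho^{\mathcal{M}}(X)=\sup_{P\in\mathcal{M}}\widehat\rho^P(X)$. *)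

theory Defs
  imports "HOL-Probability.Probability"
begin

text \<open>The measurable space (Omega, F) is represented by a measure M; only
  space M and sets M are used.\<close>

definition M1 :: "'a measure \<Rightarrow> 'a measure set" where
  "M1 M = {Q. prob_space Q \<and> sets Q = sets M}"

definition bddX :: "'a measure \<Rightarrow> ('a \<Rightarrow> real) set" where
  "bddX M = {X. X \<in> borel_measurable M \<and> (\<exists>C. \<forall>\<omega>\<in>space M. \<bar>X \<omega>\<bar> \<le> C)}"

definition Linf :: "'a measure \<Rightarrow> ('a \<Rightarrow> real) set" where
  "Linf P = {X. X \<in> borel_measurable P \<and> (\<exists>C. AE \<omega> in P. \<bar>X \<omega>\<bar> \<le> C)}"

definition weak_star_topology :: "'a measure \<Rightarrow> 'a measure topology" where
  "weak_star_topology M = topology_generated_by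
     {{Q \<in> M1 M. (\<integral>\<omega>. X \<omega> \<partial>Q) \<in> U} | X U. X \<in> bddX M \<and> open U}"

definition PP :: "'a measure \<Rightarrow> 'a measure \<Rightarrow> 'a measure set" where
  "PP M P = {Q \<in> M1 M. absolutely_continuous P Q}"

definition rho :: "'a measure \<Rightarrow> ('a measure \<Rightarrow> ereal) \<Rightarrow> ('a \<Rightarrow> real) \<Rightarrow> ereal" where
  "rho M \<alpha> X = (SUP Q\<in>M1 M. ereal (\<integral>\<omega>. - X \<omega> \<partial>Q) - \<alpha> Q)"

definition rhoP :: "'a measure \<Rightarrow> ('a measure \<Rightarrow> ereal) \<Rightarrow> 'a measure \<Rightarrow> ('a \<Rightarrow> real) \<Rightarrow> ereal" where
  "rhoP M \<alpha> P X = (INF Xt\<in>{Xt \<in> bddX M. AE \<omega> in P. Xt \<omega> = X \<omega>}. rho M \<alpha> Xt)"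

definition rhohatP :: "'a measure \<Rightarrow> ('a measure \<Rightarrow> ereal) \<Rightarrow> 'a measure \<Rightarrow> ('a \<Rightarrow> real) \<Rightarrow> ereal" where
  "rhohatP M \<alpha> P X = (SUP Q\<in>PP M P. ereal (\<integral>\<omega>. - X \<omega> \<partial>Q) - \<alpha> Q)"

definition XM :: "'a measure set \<Rightarrow> ('a \<Rightarrow> real) set" where
  "XM Ms = {X. \<forall>P\<in>Ms. X \<in> Linf P}"

definition rhoM :: "'a measure \<Rightarrow> ('a measure \<Rightarrow> ereal) \<Rightarrow> 'a measure set \<Rightarrow> ('a \<Rightarrow> real) \<Rightarrow> ereal" where
  "rhoM M \<alpha> Ms X = (SUP P\<in>Ms. rhoP M \<alpha> P X)"

definition rhohatM :: "'a measure \<Rightarrow> ('a measure \<Rightarrow> ereal) \<Rightarrow> 'a measure set \<Rightarrow> ('a \<Rightarrow> real) \<Rightarrow> ereal" where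
  "rhohatM M \<alpha> Ms X = (SUP P\<in>Ms. rhohatP M \<alpha> P X)"

end

theory Submission
  imports Defs
begin

lemma sup_QP_eq:
  fixes M :: "'a measure" and \<alpha> :: "'a measure \<Rightarrow> ereal"
  assumes "QP \<subseteq> S" "S \<subseteq> M1 M"
    and out: "\<And>Q. Q \<in> M1 M - QP \<Longrightarrow> \<alpha> Q = \<infinity>"
    and ae: "\<And>Q. Q \<in> QP \<Longrightarrow> AE \<omega> in Q. Y \<omega> = X \<omega>"
    and mX: "X \<in> borel_measurable M" and mY: "Y \<in> borel_measurable M"
  shows "(SUP Q\<in>S. ereal (\<integral>\<omega>. - Y \<omega> \<partial>Q) - \<alpha> Q) = (SUP Q\<in>QP. ereal (\<integral>\<omega>. - X \<omega> \<partial>Q) - \<alpha> Q)"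
proof (rule antisym)
  show "(SUP Q\<in>S. ereal (\<integral>\<omega>. - Y \<omega> \<partial>Q) - \<alpha> Q) \<le> (SUP Q\<in>QP. ereal (\<integral>\<omega>. - X \<omega> \<partial>Q) - \<alpha> Q)"
  proof (rule SUP_least)
    fix Q assume Q: "Q \<in> S"
    show "ereal (\<integral>\<omega>. - Y \<omega> \<partial>Q) - \<alpha> Q \<le> (SUP Q\<in>QP. ereal (\<integral>\<omega>. - X \<omega> \<partial>Q) - \<alpha> Q)"
    proof (cases "Q \<in> QP")
      case True
      have sQ: "sets Q = sets M" using True assms(1,2) by (auto simp: M1_def)
      have "(\<integral>\<omega>. - Y \<omega> \<partial>Q) = (\<integral>\<omega>. - X \<omega> \<partial>Q)"
        using ae[OF True] measurable_cong_sets[OF sQ refl] mX mY by (intro integral_cong_AE) auto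
      then show ?thesis using True by (auto intro: SUP_upper2)
    next
      case False
      then have "\<alpha> Q = \<infinity>" using out Q assms(2) by auto
      then show ?thesis by simp
    qed
  qed
next
  show "(SUP Q\<in>QP. ereal (\<integral>\<omega>. - X \<omega> \<partial>Q) - \<alpha> Q) \<le> (SUP Q\<in>S. ereal (\<integral>\<omega>. - Y \<omega> \<partial>Q) - \<alpha> Q)"
  proof (rule SUP_least)
    fix Q assume Q: "Q \<in> QP"
    have sQ: "sets Q = sets M" using Q assms(1,2) by (auto simp: M1_def)
    have "(\<integral>\<omega>. - Y \<omega> \<partial>Q) = (\<integral>\<omega>. - X \<omega> \<partial>Q)"
      using ae[OF Q] measurable_cong_sets[OF sQ refl] mX mY by (intro integral_cong_AE) auto
    then show "ereal (\<integral>\<omega>. - X \<omega> \<partial>Q) - \<alpha> Q \<le> (SUP Q\<in>S. ereal (\<integral>\<omega>. - Y \<omega> \<partial>Q) - \<alpha> Q)"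
      using Q assms(1) by (auto intro!: SUP_upper2[of Q])
  qed
qed

theorem corollary5p10:
  fixes M :: "'a measure" and Ms :: "'a measure set" and P :: "'a measure"
    and \<alpha> \<alpha>t :: "'a measure \<Rightarrow> ereal" and QP :: "'a measure set"
    and X :: "'a \<Rightarrow> real"
  assumes Ms_sub: "Ms \<subseteq> M1 M"
    and P_in: "P \<in> Ms"
    and QP_sub: "QP \<subseteq> PP M P"
    and QP_closed: "closedin (weak_star_topology M) QP"
    and alpha_in: "\<And>Q. Q \<in> QP \<Longrightarrow> \<alpha> Q = \<alpha>t Q"
    and alpha_out: "\<And>Q. Q \<in> M1 M - QP \<Longrightarrow> \<alpha> Q = \<infinity>"
    and alphat_fin: "\<And>Q. Q \<in> QP \<Longrightarrow> \<alpha>t Q < \<infinity>"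
    and alphat_inf: "(INF Q\<in>QP. \<alpha>t Q) > - \<infinity>"
    and rho_real: "\<And>Y. Y \<in> bddX M \<Longrightarrow> \<bar>rho M \<alpha> Y\<bar> < \<infinity>"
    and X_in: "X \<in> XM Ms \<inter> Linf P"
  shows "rhohatM M \<alpha> Ms X = rhohatP M \<alpha> P X
       \<and> rhohatP M \<alpha> P X = rhoP M \<alpha> P X
       \<and> rhoP M \<alpha> P X = rhoM M \<alpha> Ms X"
proof -
  define R where "R = (SUP Q\<in>QP. ereal (\<integral>\<omega>. - X \<omega> \<partial>Q) - \<alpha> Q)"
  have PM: "P \<in> M1 M" using Ms_sub P_in by auto
  have setsP: "sets P = sets M" using PM by (simp add: M1_def)
  have QPM1: "QP \<subseteq> M1 M" using QP_sub by (auto simp: PP_def)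
  have transfer: "AE \<omega> in Q. Y \<omega> = X \<omega>" if "Q \<in> QP" "AE \<omega> in P. Y \<omega> = X \<omega>" for Q Y
  proof -
    have "Q \<in> M1 M" "absolutely_continuous P Q" using that QP_sub by (auto simp: PP_def)
    then have "sets Q = sets P" using setsP by (simp add: M1_def)
    then show ?thesis using absolutely_continuous_AE \<open>absolutely_continuous P Q\<close> that(2) by blast
  qed
  have XmM: "X \<in> borel_measurable M" using X_in setsP measurable_cong_sets by (auto simp: Linf_def)
  have rho_eq: "rho M \<alpha> Y = R" if "AE \<omega> in P. Y \<omega> = X \<omega>" "Y \<in> bddX M" for Y
    unfolding rho_def R_def
    by (rule sup_QP_eq[OF _ order_refl alpha_out]) (use QPM1 transfer that XmM in \<open>auto simp: bddX_def\<close>)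
  have hatP: "rhohatP M \<alpha> P X = R"
    unfolding rhohatP_def R_def
    by (rule sup_QP_eq[OF QP_sub _ alpha_out]) (use XmM in \<open>auto simp: PP_def\<close>)
  have trunc: "\<exists>Y\<in>bddX M. (AE \<omega> in P. Y \<omega> = X \<omega>) \<and> (AE \<omega> in P'. Y \<omega> = X \<omega>)"
    if "P' \<in> Ms" for P'
  proof -
    have "X \<in> Linf P" "X \<in> Linf P'" using X_in that by (auto simp: XM_def)
    then obtain C1 C2 where XmP: "X \<in> borel_measurable P" and C1: "AE \<omega> in P. \<bar>X \<omega>\<bar> \<le> C1"
      and C2: "AE \<omega> in P'. \<bar>X \<omega>\<bar> \<le> C2" by (auto simp: Linf_def)
    define C where "C = max \<bar>C1\<bar> \<bar>C2\<bar>"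
    define Y where "Y = (\<lambda>\<omega>. if \<bar>X \<omega>\<bar> \<le> C then X \<omega> else 0)"
    have Xm: "X \<in> borel_measurable M" using XmP setsP measurable_cong_sets by blast
    have "Y \<in> borel_measurable M" unfolding Y_def using Xm by measurable
    moreover have "\<forall>\<omega>\<in>space M. \<bar>Y \<omega>\<bar> \<le> C" by (auto simp: Y_def C_def)
    ultimately have "Y \<in> bddX M" by (auto simp: bddX_def)
    moreover have "AE \<omega> in P. Y \<omega> = X \<omega>" using C1 by eventually_elim (auto simp: Y_def C_def)
    moreover have "AE \<omega> in P'. Y \<omega> = X \<omega>" using C2 by eventually_elim (auto simp: Y_def C_def)
    ultimately show ?thesis by blast
  qed
  have rhoP_eq: "rhoP M \<alpha> P X = R"
  proof -
    obtain Y where "Y \<in> bddX M" "AE \<omega> in P. Y \<omega> = X \<omega>" using trunc[OF P_in] by blast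
    then have ne: "{Xt \<in> bddX M. AE \<omega> in P. Xt \<omega> = X \<omega>} \<noteq> {}" by blast
    show ?thesis unfolding rhoP_def
    proof (rule antisym)
      show "(INF Xt\<in>{Xt \<in> bddX M. AE \<omega> in P. Xt \<omega> = X \<omega>}. rho M \<alpha> Xt) \<le> R"
        using \<open>Y \<in> bddX M\<close> \<open>AE \<omega> in P. Y \<omega> = X \<omega>\<close> rho_eq by (auto intro!: INF_lower2[of Y])
      show "R \<le> (INF Xt\<in>{Xt \<in> bddX M. AE \<omega> in P. Xt \<omega> = X \<omega>}. rho M \<alpha> Xt)"
        using rho_eq by (auto intro!: INF_greatest)
    qed
  qed
  have hat_le: "rhohatP M \<alpha> P' X \<le> R" for P'
    unfolding rhohatP_def
  proof (rule SUP_least)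
    fix Q assume Q: "Q \<in> PP M P'"
    show "ereal (\<integral>\<omega>. - X \<omega> \<partial>Q) - \<alpha> Q \<le> R"
    proof (cases "Q \<in> QP")
      case True then show ?thesis unfolding R_def by (auto intro: SUP_upper)
    next
      case False then show ?thesis using alpha_out Q by (auto simp: PP_def)
    qed
  qed
  have rhoP_le: "rhoP M \<alpha> P' X \<le> R" if P'in: "P' \<in> Ms" for P'
  proof -
    obtain Y where Y: "Y \<in> bddX M" "AE \<omega> in P. Y \<omega> = X \<omega>" "AE \<omega> in P'. Y \<omega> = X \<omega>"
      using trunc[OF P'in] by blast
    have "rhoP M \<alpha> P' X \<le> rho M \<alpha> Y" unfolding rhoP_def using Y by (auto intro: INF_lower)
    also have "\<dots> = R" using rho_eq Y(1,2) by simp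
    finally show ?thesis .
  qed
  have "rhohatM M \<alpha> Ms X = R"
    unfolding rhohatM_def
    by (rule antisym) (use hat_le P_in hatP in \<open>auto intro: SUP_least SUP_upper2[of P]\<close>)
  moreover have "rhoM M \<alpha> Ms X = R"
    unfolding rhoM_def
    by (rule antisym) (use rhoP_le P_in rhoP_eq in \<open>auto intro: SUP_least SUP_upper2[of P]\<close>)
  ultimately show ?thesis using hatP rhoP_eq by simp
qed

end
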